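(* For every integer $r\geq 3$ and every integer $n>6^r$, there exists a collection of $n$ matchings, each of size $n+\frac{1}{12r}n^{\frac{r-1}{r}}-1$, in an $r$-partite $r$-uniform hypergraph that does not admit a rainbow matching of size $n$.
   Context: A hypergraph is $r$-uniform if every edge contains exactly $r$ vertices. An $r$-uniform hypergraph is $r$-partite if its vertex set can be partitioned into $r$ sets $V_1,\dots,V_r$ such that every edge contains exactly one vertex from each $V_i$. A matching is a set of pairwise vertex-disjoint edges. Given a collection (repetitions allowed) of matchings $M_1,\dots,M_n$ in a hypergraph, a matching $M\subseteq \bigcup_{i=1}^n M_i$ is rainbow if there is an injection $\phi:M\to[n]$ such that every edge $e\in M$ belongs to $M_{\phi(e)}$. *)

theory Defs
  imports Complex_Main
begin

definition hypergraph :: "'a set \<Rightarrow> 'a set set \<Rightarrow> bool" where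
  "hypergraph V E \<longleftrightarrow> finite V \<and> (\<forall>e\<in>E. e \<subseteq> V)"

definition r_uniform :: "nat \<Rightarrow> 'a set set \<Rightarrow> bool" where
  "r_uniform r E \<longleftrightarrow> (\<forall>e\<in>E. finite e \<and> card e = r)"

definition r_partite :: "nat \<Rightarrow> 'a set \<Rightarrow> 'a set set \<Rightarrow> bool" where
  "r_partite r V E \<longleftrightarrow> (\<exists>P :: nat \<Rightarrow> 'a set.
      V = (\<Union>i\<in>{1..r}. P i) \<and>
      (\<forall>i\<in>{1..r}. \<forall>j\<in>{1..r}. i \<noteq> j \<longrightarrow> P i \<inter> P j = {}) \<and>
      (\<forall>e\<in>E. \<forall>i\<in>{1..r}. card (e \<inter> P i) = 1))"

definition matching :: "'a set set \<Rightarrow> 'a set set \<Rightarrow> bool" where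
  "matching E M \<longleftrightarrow> M \<subseteq> E \<and> (\<forall>e\<in>M. \<forall>f\<in>M. e \<noteq> f \<longrightarrow> e \<inter> f = {})"

definition rainbow_matching :: "(nat \<Rightarrow> 'a set set) \<Rightarrow> nat \<Rightarrow> 'a set set \<Rightarrow> bool" where
  "rainbow_matching Ms n M \<longleftrightarrow>
     M \<subseteq> (\<Union>i\<in>{1..n}. Ms i) \<and> (\<forall>e\<in>M. \<forall>f\<in>M. e \<noteq> f \<longrightarrow> e \<inter> f = {}) \<and>
     (\<exists>\<phi>. inj_on \<phi> M \<and> (\<forall>e\<in>M. \<phi> e \<in> {1..n} \<and> e \<in> Ms (\<phi> e)))"

end

theory Submission
  imports Defs
begin

lemma inj_affine_mod:
  fixes c e N :: nat
  assumes "coprime c N"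
  shows "inj_on (\<lambda>x. (c*x + e) mod N) {0..<N}"
proof (rule inj_onI)
  fix x y assume x: "x \<in> {0..<N}" and y: "y \<in> {0..<N}"
    and eq: "(c*x + e) mod N = (c*y + e) mod N"
  show "x = y"
  proof (cases "y \<le> x")
    case True
    have "N dvd (c*x + e) - (c*y + e)"
      using eq True by (subst mod_eq_dvd_iff_nat[symmetric]) auto
    moreover have "(c*x + e) - (c*y + e) = c*(x - y)" by (simp add: diff_mult_distrib2)
    ultimately have "N dvd c*(x-y)" by simp
    hence "N dvd (x - y)" using assms coprime_dvd_mult_right_iff coprime_commute by blast
    moreover have "x - y < N" using x by auto
    ultimately have "x - y = 0" using dvd_imp_le by fastforce
    thus ?thesis using True by simp
  next
    case False
    have "N dvd (c*y + e) - (c*x + e)"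
      using eq False by (subst mod_eq_dvd_iff_nat[symmetric]) auto
    moreover have "(c*y + e) - (c*x + e) = c*(y - x)" by (simp add: diff_mult_distrib2)
    ultimately have "N dvd c*(y-x)" by simp
    hence "N dvd (y - x)" using assms coprime_dvd_mult_right_iff coprime_commute by blast
    moreover have "y - x < N" using y by auto
    ultimately have "y - x = 0" using dvd_imp_le by fastforce
    thus ?thesis using False by simp
  qed
qed

lemma iso_step:
  fixes N L d :: nat and X :: "nat set"
  assumes odd: "odd N" and XN: "X \<subseteq> {0..<N}" and d: "d < 2^L"
  shows "card {x\<in>X. (2^L*x + d) mod N \<notin> X}
     \<le> L * (card {x\<in>X. (2*x) mod N \<notin> X} + card {x\<in>X. (x+1) mod N \<notin> X})"
  using d
proof (induction L arbitrary: d)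
  case 0
  hence "d = 0" by simp
  have "{x\<in>X. (2^0*x + d) mod N \<notin> X} = {}"
    using XN \<open>d = 0\<close> by auto
  then show ?case by (simp only: card.empty)
next
  case (Suc L)
  define G where "G = {x\<in>X. (2*x) mod N \<notin> X}"
  define F where "F = {x\<in>X. (x+1) mod N \<notin> X}"
  define d' where "d' = d div 2"
  define a where "a = d mod 2"
  define h where "h = (\<lambda>x. (2^L*x + d') mod N)"
  define k where "k = (\<lambda>x. (2 * h x) mod N)"
  have fin: "finite X" using XN finite_subset by blast
  have d'lt: "d' < 2^L" using Suc.prems d'_def by auto
  have copr: "coprime (2::nat) N" using odd by (simp add: coprime_left_2_iff_odd)
  have "2^(Suc L)*x + d = 2*(2^L*x + d') + a" for x
    unfolding d'_def a_def by simp
  hence T: "(2^(Suc L)*x + d) mod N = (2 * h x + a) mod N" for x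
    unfolding h_def by (metis mod_add_left_eq mod_mult_right_eq)
  have kform: "k x = (2^(Suc L)*x + 2*d') mod N" for x
    unfolding k_def h_def by (simp add: mod_mult_right_eq algebra_simps)
  define S1 where "S1 = {x\<in>X. h x \<notin> X}"
  define S2 where "S2 = {x\<in>X. h x \<in> X \<and> (2 * h x) mod N \<notin> X}"
  define S3 where "S3 = {x\<in>X. k x \<in> X \<and> (k x + 1) mod N \<notin> X}"
  have sub: "{x\<in>X. (2^(Suc L)*x + d) mod N \<notin> X} \<subseteq> S1 \<union> S2 \<union> S3"
  proof
    fix x assume "x \<in> {x\<in>X. (2^(Suc L)*x + d) mod N \<notin> X}"
    hence xX: "x \<in> X" and nx: "(2 * h x + a) mod N \<notin> X" using T by auto
    show "x \<in> S1 \<union> S2 \<union> S3"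
    proof (cases "h x \<in> X")
      case False thus ?thesis using xX S1_def by auto
    next
      case True
      show ?thesis
      proof (cases "k x \<in> X")
        case False thus ?thesis using xX True S2_def k_def by auto
      next
        case kX: True
        have "a = 0 \<or> a = 1" unfolding a_def by auto
        moreover have "a \<noteq> 0" proof assume "a = 0" thus False using nx kX k_def by simp qed
        ultimately have "a = 1" by simp
        hence "(k x + 1) mod N \<notin> X" using nx unfolding k_def by (metis mod_add_left_eq)
        thus ?thesis using xX kX S3_def by auto
      qed
    qed
  qed
  have "card {x\<in>X. (2^(Suc L)*x + d) mod N \<notin> X} \<le> card (S1 \<union> S2 \<union> S3)"
    using sub fin by (intro card_mono) (auto simp: S1_def S2_def S3_def)
  also have "\<dots> \<le> card S1 + card S2 + card S3"
    by (meson add_le_mono1 card_Un_le le_trans)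
  also have "card S1 \<le> L * (card G + card F)"
    using Suc.IH[OF d'lt] unfolding S1_def h_def G_def F_def by simp
  also have "card S2 \<le> card G"
  proof -
    have inj: "inj_on h S2"
      using inj_affine_mod[of "2^L" N d'] copr XN
      unfolding h_def S2_def by (auto intro: inj_on_subset simp: coprime_power_left_iff)
    have "h ` S2 \<subseteq> G" unfolding S2_def G_def by auto
    hence "card (h ` S2) \<le> card G" using fin G_def by (intro card_mono) auto
    thus ?thesis using card_image[OF inj] by simp
  qed
  also have "card S3 \<le> card F"
  proof -
    have inj0: "inj_on (\<lambda>x. (2^(Suc L)*x + 2*d') mod N) {0..<N}"
      using inj_affine_mod[of "2^(Suc L)" N "2*d'"] copr by (simp add: coprime_power_left_iff)
    have inj: "inj_on k S3"
      using inj_on_subset[OF inj0, of S3] XN unfolding S3_def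
      by (auto simp: kform[abs_def])
    have "k ` S3 \<subseteq> F" unfolding S3_def F_def by auto
    hence "card (k ` S3) \<le> card F" using fin F_def by (intro card_mono) auto
    thus ?thesis using card_image[OF inj] by simp
  qed
  finally show ?case unfolding G_def F_def by simp
qed

lemma card_filter_sum: "finite A \<Longrightarrow> card {x\<in>A. P x} = (\<Sum>x\<in>A. if P x then 1 else (0::nat))"
  by (simp add: sum.If_cases Int_def conj_commute)

lemma card_shift_out:
  fixes N c :: nat
  assumes XN: "X \<subseteq> {0..<N}"
  shows "card {d\<in>{0..<N}. (c + d) mod N \<notin> X} = N - card X"
proof -
  define f where "f = (\<lambda>d. (1*d + c) mod N)"
  have inj: "inj_on f {0..<N}" unfolding f_def by (rule inj_affine_mod) simp
  have img: "f ` {0..<N} = {0..<N}"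
  proof -
    have "f ` {0..<N} \<subseteq> {0..<N}" unfolding f_def
      by (auto simp: XN)
    moreover have "card (f ` {0..<N}) = card {0..<N}" using card_image[OF inj] .
    ultimately show ?thesis by (simp add: card_subset_eq)
  qed
  have eq: "f ` {d\<in>{0..<N}. f d \<notin> X} = {0..<N} - X"
  proof
    show "f ` {d\<in>{0..<N}. f d \<notin> X} \<subseteq> {0..<N} - X" using img by auto
  next
    show "{0..<N} - X \<subseteq> f ` {d\<in>{0..<N}. f d \<notin> X}"
    proof
      fix y assume y: "y \<in> {0..<N} - X"
      then obtain d where "d \<in> {0..<N}" "y = f d" using img by (metis Diff_iff imageE)
      thus "y \<in> f ` {d\<in>{0..<N}. f d \<notin> X}" using y by auto
    qed
  qed
  have inj2: "inj_on f {d\<in>{0..<N}. f d \<notin> X}" using inj by (rule inj_on_subset) auto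
  have "card {d\<in>{0..<N}. f d \<notin> X} = card ({0..<N} - X)"
    using card_image[OF inj2] eq by simp
  also have "\<dots> = N - card X" using XN by (simp add: card_Diff_subset finite_subset)
  finally show ?thesis unfolding f_def by (simp add: add.commute)
qed

lemma iso_main:
  fixes N L :: nat and X :: "nat set"
  assumes odd: "odd N" and XN: "X \<subseteq> {0..<N}" and NL: "N \<le> 2^L"
  shows "card X * (N - card X)
     \<le> N * (L * (card {x\<in>X. (2*x) mod N \<notin> X} + card {x\<in>X. (x+1) mod N \<notin> X}))"
proof -
  define B where "B = L * (card {x\<in>X. (2*x) mod N \<notin> X} + card {x\<in>X. (x+1) mod N \<notin> X})"
  define P where "P = (\<lambda>d x. (2^L*x + d) mod N \<notin> X)"
  have fin: "finite X" using XN finite_subset by blast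
  have each: "card {x\<in>X. P d x} \<le> B" if "d \<in> {0..<N}" for d
    unfolding P_def B_def using iso_step[OF odd XN, of d L] that NL by auto
  have "(\<Sum>d\<in>{0..<N}. card {x\<in>X. P d x}) \<le> N * B"
    using sum_bounded_above[of "{0..<N}" "\<lambda>d. card {x\<in>X. P d x}" B] each by simp
  moreover have "(\<Sum>d\<in>{0..<N}. card {x\<in>X. P d x}) = (\<Sum>x\<in>X. card {d\<in>{0..<N}. P d x})"
  proof -
    have "(\<Sum>d\<in>{0..<N}. card {x\<in>X. P d x}) = (\<Sum>d\<in>{0..<N}. \<Sum>x\<in>X. if P d x then 1 else (0::nat))"
      using fin by (simp add: card_filter_sum)
    also have "\<dots> = (\<Sum>x\<in>X. \<Sum>d\<in>{0..<N}. if P d x then 1 else (0::nat))"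
      by (rule sum.swap)
    also have "\<dots> = (\<Sum>x\<in>X. card {d\<in>{0..<N}. P d x})"
      by (intro sum.cong refl, rule card_filter_sum[symmetric]) simp
    finally show ?thesis .
  qed
  moreover have "card {d\<in>{0..<N}. P d x} = N - card X" for x
    unfolding P_def using card_shift_out[OF XN, of "2^L*x"] by simp
  ultimately show ?thesis unfolding B_def by simp
qed

definition part :: "nat \<Rightarrow> nat \<Rightarrow> nat set" where
  "part N j = {j*N..<j*N+N}"

definition edg :: "nat \<Rightarrow> nat \<Rightarrow> (nat \<Rightarrow> nat) \<Rightarrow> nat set" where
  "edg r N f = (\<lambda>j. j*N + f j) ` {1..r}"

definition bfun :: "nat \<Rightarrow> nat \<Rightarrow> nat \<Rightarrow> nat" where
  "bfun N x j = (if j = 2 then (x+1) mod N else if j = 3 then (2*x) mod N else x)"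

definition Am :: "nat \<Rightarrow> nat \<Rightarrow> nat set set" where
  "Am r N = (\<lambda>z. edg r N (\<lambda>_. z)) ` {0..<N}"

definition Bm :: "nat \<Rightarrow> nat \<Rightarrow> nat set set" where
  "Bm r N = (\<lambda>x. edg r N (bfun N x)) ` {0..<N}"

lemma decode:
  fixes j j' a b N :: nat
  assumes "j*N + a = j'*N + b" "a < N" "b < N"
  shows "j = j' \<and> a = b"
proof -
  have "(j*N + a) div N = j" using assms(2) by simp
  moreover have "(j'*N + b) div N = j'" using assms(3) by simp
  ultimately have "j = j'" using assms(1) by simp
  thus ?thesis using assms(1) by simp
qed

lemma edg_inter_part:
  assumes "\<forall>j\<in>{1..r}. f j < N" "i \<in> {1..r}"
  shows "edg r N f \<inter> part N i = {i*N + f i}"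
proof
  show "edg r N f \<inter> part N i \<subseteq> {i*N + f i}"
  proof
    fix v assume v: "v \<in> edg r N f \<inter> part N i"
    then obtain j where j: "j \<in> {1..r}" "v = j*N + f j" unfolding edg_def by auto
    have "i*N \<le> v" "v < i*N + N" using v unfolding part_def by auto
    hence "v = i*N + (v - i*N)" "v - i*N < N" by auto
    hence "j = i \<and> f j = v - i*N" using decode[of j N "f j" i "v - i*N"] j assms(1) by auto
    thus "v \<in> {i*N + f i}" using j by auto
  qed
next
  show "{i*N + f i} \<subseteq> edg r N f \<inter> part N i"
    using assms unfolding edg_def part_def by auto
qed

lemma edg_disj_iff:
  assumes "\<forall>j\<in>{1..r}. f j < N" "\<forall>j\<in>{1..r}. g j < N"
  shows "edg r N f \<inter> edg r N g = {} \<longleftrightarrow> (\<forall>j\<in>{1..r}. f j \<noteq> g j)"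
proof
  assume d: "edg r N f \<inter> edg r N g = {}"
  show "\<forall>j\<in>{1..r}. f j \<noteq> g j"
  proof (intro ballI notI)
    fix j assume j: "j \<in> {1..r}" and eq: "f j = g j"
    have "j*N + f j \<in> edg r N f" using j unfolding edg_def by auto
    moreover have "j*N + g j \<in> edg r N g" using j unfolding edg_def by auto
    hence "j*N + f j \<in> edg r N g" using eq by simp
    ultimately show False using d by blast
  qed
next
  assume ne: "\<forall>j\<in>{1..r}. f j \<noteq> g j"
  show "edg r N f \<inter> edg r N g = {}"
  proof (rule ccontr)
    assume "edg r N f \<inter> edg r N g \<noteq> {}"
    then obtain v where "v \<in> edg r N f" "v \<in> edg r N g" by blast
    then obtain j j' where j: "j \<in> {1..r}" "j' \<in> {1..r}" "v = j*N + f j" "v = j'*N + g j'"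
      unfolding edg_def by blast
    hence j3: "j*N + f j = j'*N + g j'" by simp
    have "j = j' \<and> f j = g j'" using decode[OF j3] assms j by auto
    thus False using ne j(1) by force
  qed
qed

lemma edg_eq_imp:
  assumes "\<forall>j\<in>{1..r}. f j < N" "\<forall>j\<in>{1..r}. g j < N" "edg r N f = edg r N g"
  shows "\<forall>j\<in>{1..r}. f j = g j"
proof
  fix j assume j: "j \<in> {1..r}"
  have "{j*N + f j} = {j*N + g j}"
    using edg_inter_part[OF assms(1) j] edg_inter_part[OF assms(2) j] assms(3) by simp
  thus "f j = g j" by simp
qed

lemma card_edg:
  assumes "\<forall>j\<in>{1..r}. f j < N"
  shows "card (edg r N f) = r"
proof -
  have "inj_on (\<lambda>j. j*N + f j) {1..r}"
  proof (rule inj_onI)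
    fix i j assume "i \<in> {1..r}" "j \<in> {1..r}" "i*N + f i = j*N + f j"
    thus "i = j" using decode[of i N "f i" j "f j"] assms by auto
  qed
  thus ?thesis unfolding edg_def by (simp add: card_image)
qed

lemma bfun_lt: "0 < N \<Longrightarrow> x < N \<Longrightarrow> bfun N x j < N"
  unfolding bfun_def by auto

lemma bfun_inj:
  assumes "odd N" "x < N" "y < N" "bfun N x j = bfun N y j"
  shows "x = y"
proof -
  have c1: "coprime (1::nat) N" by simp
  have c2: "coprime (2::nat) N" using assms(1) by (simp add: coprime_left_2_iff_odd)
  have i1: "inj_on (\<lambda>x. (1*x + 1) mod N) {0..<N}" by (rule inj_affine_mod[OF c1])
  have i2: "inj_on (\<lambda>x. (2*x + 0) mod N) {0..<N}" by (rule inj_affine_mod[OF c2])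
  have x: "x \<in> {0..<N}" and y: "y \<in> {0..<N}" using assms by auto
  show ?thesis
  proof (cases "j = 2")
    case True
    hence "(1*x + 1) mod N = (1*y + 1) mod N" using assms(4) unfolding bfun_def by simp
    thus ?thesis using inj_onD[OF i1 _ x y] by blast
  next
    case False
    show ?thesis
    proof (cases "j = 3")
      case True
      hence "(2*x + 0) mod N = (2*y + 0) mod N" using assms(4) unfolding bfun_def by simp
      thus ?thesis using inj_onD[OF i2 _ x y] by blast
    next
      case False
      thus ?thesis using \<open>j \<noteq> 2\<close> assms(4) unfolding bfun_def by simp
    qed
  qed
qed

lemma card_NX_ge:
  fixes g :: "nat \<Rightarrow> nat"
  assumes fin: "finite NX" and XNX: "X \<subseteq> NX" and gX: "g ` X \<subseteq> NX"
    and inj: "inj_on g X"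
  shows "card X + card {x\<in>X. g x \<notin> X} \<le> card NX"
proof -
  have fX: "finite X" using fin XNX finite_subset by blast
  have "g ` {x\<in>X. g x \<notin> X} \<subseteq> NX - X" using gX by auto
  hence "card (g ` {x\<in>X. g x \<notin> X}) \<le> card (NX - X)" using fin by (intro card_mono) auto
  moreover have "card (g ` {x\<in>X. g x \<notin> X}) = card {x\<in>X. g x \<notin> X}"
    using inj by (intro card_image) (auto intro: inj_on_subset)
  moreover have "card NX = card X + card (NX - X)"
    using fin XNX by (metis card_Diff_subset fX le_add_diff_inverse card_mono)
  ultimately show ?thesis by simp
qed

lemma no_rainbow:
  fixes r N n mA mB L :: nat and Ms :: "nat \<Rightarrow> nat set set"
  assumes r3: "r \<ge> 3" and odd: "odd N" and N3: "N \<ge> 3" and nN: "n \<le> N" and sum: "mA + mB = n"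
    and NL: "N \<le> 2^L" and key: "2*N*L*(N - n) < mB*(N - mB)"
    and Ms: "\<forall>i. Ms i = (if i \<le> mA then Am r N else Bm r N)"
  shows "\<not> (\<exists>M. rainbow_matching Ms n M \<and> card M = n)"
proof
  assume "\<exists>M. rainbow_matching Ms n M \<and> card M = n"
  then obtain M where rm: "rainbow_matching Ms n M" and cM: "card M = n" by blast
  from rm have disj: "\<forall>e\<in>M. \<forall>f\<in>M. e \<noteq> f \<longrightarrow> e \<inter> f = {}"
    and "\<exists>\<phi>. inj_on \<phi> M \<and> (\<forall>e\<in>M. \<phi> e \<in> {1..n} \<and> e \<in> Ms (\<phi> e))"
    unfolding rainbow_matching_def by auto
  then obtain \<phi> where inj: "inj_on \<phi> M" and ph: "\<forall>e\<in>M. \<phi> e \<in> {1..n} \<and> e \<in> Ms (\<phi> e)"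
    by blast
  have mBpos: "mB > 0" using key by (cases "mB = 0") auto
  hence npos: "n > 0" using sum by simp
  have finM: "finite M" using cM npos card_ge_0_finite by blast
  have phM: "\<phi> ` M = {1..n}"
  proof -
    have "\<phi> ` M \<subseteq> {1..n}" using ph by auto
    moreover have "card (\<phi> ` M) = card {1..n}" using card_image[OF inj] cM by simp
    ultimately show ?thesis by (simp add: card_subset_eq)
  qed
  define MA where "MA = {e\<in>M. \<phi> e \<le> mA}"
  define MB where "MB = {e\<in>M. mA < \<phi> e}"
  have "\<phi> ` MA = {1..mA}"
  proof
    show "\<phi> ` MA \<subseteq> {1..mA}" using ph unfolding MA_def by auto
    show "{1..mA} \<subseteq> \<phi> ` MA"
    proof
      fix i assume i: "i \<in> {1..mA}"
      hence "i \<in> \<phi> ` M" using phM sum by auto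
      then obtain e where "e \<in> M" "i = \<phi> e" by blast
      thus "i \<in> \<phi> ` MA" using i unfolding MA_def by auto
    qed
  qed
  hence cMA: "card MA = mA"
    using card_image[OF inj_on_subset[OF inj, of MA]] unfolding MA_def by auto
  have "\<phi> ` MB = {Suc mA..n}"
  proof
    show "\<phi> ` MB \<subseteq> {Suc mA..n}" using ph unfolding MB_def by auto
    show "{Suc mA..n} \<subseteq> \<phi> ` MB"
    proof
      fix i assume i: "i \<in> {Suc mA..n}"
      hence "i \<in> \<phi> ` M" using phM by auto
      then obtain e where "e \<in> M" "i = \<phi> e" by blast
      thus "i \<in> \<phi> ` MB" using i unfolding MB_def by auto
    qed
  qed
  hence cMB: "card MB = mB"
    using card_image[OF inj_on_subset[OF inj, of MB]] sum unfolding MB_def by auto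
  have MAsub: "MA \<subseteq> Am r N" using ph Ms unfolding MA_def by auto
  have MBsub: "MB \<subseteq> Bm r N" using ph Ms unfolding MB_def by force
  define a where "a = (\<lambda>z. edg r N (\<lambda>_. z))"
  define b where "b = (\<lambda>x. edg r N (bfun N x))"
  have one: "(1::nat) \<in> {1..r}" and two: "(2::nat) \<in> {1..r}" and three: "(3::nat) \<in> {1..r}"
    using r3 by auto
  have Npos: "0 < N" using N3 by simp
  have alt: "\<forall>j\<in>{1..r}. (\<lambda>_. z) j < N" if "z < N" for z using that by simp
  have blt: "\<forall>j\<in>{1..r}. bfun N x j < N" if "x < N" for x using that bfun_lt[OF Npos] by simp
  have injA: "inj_on a {0..<N}"
  proof (rule inj_onI)
    fix z z' assume zz: "z \<in> {0..<N}" "z' \<in> {0..<N}" "a z = a z'"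
    hence "\<forall>j\<in>{1..r}. (\<lambda>_. z) j = (\<lambda>_. z') j"
      using edg_eq_imp[OF alt[of z] alt[of z']] unfolding a_def by auto
    thus "z = z'" using one by auto
  qed
  have injB: "inj_on b {0..<N}"
  proof (rule inj_onI)
    fix x x' assume "x \<in> {0..<N}" "x' \<in> {0..<N}" "b x = b x'"
    hence "\<forall>j\<in>{1..r}. bfun N x j = bfun N x' j"
      using edg_eq_imp[OF blt[of x] blt[of x']] unfolding b_def by auto
    hence "bfun N x 1 = bfun N x' 1" using one by blast
    thus "x = x'" unfolding bfun_def by simp
  qed
  define Z where "Z = {z\<in>{0..<N}. a z \<in> MA}"
  define X where "X = {x\<in>{0..<N}. b x \<in> MB}"
  have XN: "X \<subseteq> {0..<N}" and ZN: "Z \<subseteq> {0..<N}" unfolding X_def Z_def by auto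
  have MAZ: "MA = a ` Z" using MAsub unfolding Z_def Am_def a_def by auto
  have "card (a ` Z) = card Z" by (rule card_image[OF inj_on_subset[OF injA ZN]])
  hence cZ: "card Z = mA" using cMA MAZ by simp
  have MBX: "MB = b ` X" using MBsub unfolding X_def Bm_def b_def by auto
  have "card (b ` X) = card X" by (rule card_image[OF inj_on_subset[OF injB XN]])
  hence cX: "card X = mB" using cMB MBX by simp
  have avoid: "z \<noteq> bfun N x j" if z: "z \<in> Z" and x: "x \<in> X" and j: "j \<in> {1..r}" for z x j
  proof -
    have zN: "z < N" and xN: "x < N" using z x XN ZN by auto
    have ne: "a z \<noteq> b x"
    proof
      assume "a z = b x"
      hence "\<forall>j\<in>{1..r}. z = bfun N x j"
        using edg_eq_imp[OF alt[OF zN] blt[OF xN]] unfolding a_def b_def by auto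
      hence "z = bfun N x 1" "z = bfun N x 2" using one two by blast+
      hence "z = x" "z = (x+1) mod N" unfolding bfun_def by simp_all
      hence "x = (x+1) mod N" by simp
      moreover have "(x+1) mod N \<noteq> x"
      proof (cases "x + 1 < N")
        case True thus ?thesis by simp
      next
        case False
        hence "x + 1 = N" using xN by simp
        thus ?thesis using N3 by auto
      qed
      ultimately show False by simp
    qed
    have "a z \<in> M" "b x \<in> M" using z x unfolding Z_def X_def MA_def MB_def by auto
    hence "a z \<inter> b x = {}" using disj ne by auto
    hence "\<forall>j\<in>{1..r}. z \<noteq> bfun N x j"
      using edg_disj_iff[OF alt[OF zN] blt[OF xN]] unfolding a_def b_def by simp
    thus ?thesis using j by simp
  qed
  define NX where "NX = X \<union> (\<lambda>x. (x+1) mod N) ` X \<union> (\<lambda>x. (2*x) mod N) ` X"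
  have NXN: "NX \<subseteq> {0..<N}" using XN Npos unfolding NX_def by auto
  have ZNX: "Z \<inter> NX = {}"
  proof -
    have "z \<notin> NX" if "z \<in> Z" for z
      using avoid[OF that _ one] avoid[OF that _ two] avoid[OF that _ three]
      unfolding NX_def bfun_def by auto
    thus ?thesis by blast
  qed
  have finNX: "finite NX" using NXN finite_subset by blast
  have "card Z + card NX = card (Z \<union> NX)"
    using ZNX finNX ZN by (simp add: card_Un_disjoint finite_subset)
  also have "\<dots> \<le> N" using ZN NXN by (metis card_atLeastLessThan card_mono finite_atLeastLessThan le_sup_iff minus_nat.diff_0)
  finally have ZNXle: "card Z + card NX \<le> N" .
  have c1: "coprime (1::nat) N" by simp
  have c2: "coprime (2::nat) N" using odd by (simp add: coprime_left_2_iff_odd)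
  have i1: "inj_on (\<lambda>x. (x+1) mod N) X"
    using inj_on_subset[OF inj_affine_mod[OF c1, of 1] XN] by simp
  have i2: "inj_on (\<lambda>x. (2*x) mod N) X"
    using inj_on_subset[OF inj_affine_mod[OF c2, of 0] XN] by simp
  define gam where "gam = card {x\<in>X. (2*x) mod N \<notin> X}"
  define phi where "phi = card {x\<in>X. (x+1) mod N \<notin> X}"
  have g1: "mB + gam \<le> card NX"
    using card_NX_ge[OF finNX _ _ i2] cX unfolding gam_def NX_def by auto
  have g2: "mB + phi \<le> card NX"
    using card_NX_ge[OF finNX _ _ i1] cX unfolding phi_def NX_def by auto
  have iso: "mB * (N - mB) \<le> N * (L * (gam + phi))"
    using iso_main[OF odd XN NL] cX unfolding gam_def phi_def by simp
  hence "(N*L) * (2*(N - n)) < (N*L) * (gam + phi)" using key by (simp add: algebra_simps)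
  hence "2*(N - n) < gam + phi" by (meson mult_less_cancel1)
  hence "N - n < gam \<or> N - n < phi" by auto
  hence "mB + (N - n) < card NX" using g1 g2 by auto
  hence "mA + mB + (N - n) < card Z + card NX" using cZ by simp
  thus False using ZNXle sum nN by simp
qed

lemma six_pow_ge: "r \<ge> 3 \<Longrightarrow> 12 * r \<le> (6::nat)^(r-1)"
proof (induction r rule: nat_induct_at_least)
  case base thus ?case by simp
next
  case (Suc m)
  have "(6::nat)^(Suc m - 1) = 6 * 6^(m-1)" using Suc.hyps by (cases m) auto
  thus ?case using Suc.IH Suc.hyps by simp
qed

lemma two_pow_ge: "k \<ge> 3 \<Longrightarrow> 4*k + 4 \<le> (2::nat)^(k+1)"
proof (induction k rule: nat_induct_at_least)
  case base thus ?case by simp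
next
  case (Suc m) thus ?case by simp
qed

lemma numeric_main:
  fixes u :: real and r K D :: nat and n :: real
  assumes r3: "r \<ge> 3" and u6: "u > 6" and nu: "n = u^r"
    and D: "real D \<le> n / (12 * r * u) + 1" and K: "real K \<le> u/2 + 1"
  shows "8 * real (r*K) * real D < n - 1"
proof -
  have upos: "u > 0" using u6 by simp
  have rpos: "real r > 0" using r3 by simp
  have "real (12 * r) \<le> real ((6::nat)^(r-1))" using six_pow_ge[OF r3] by linarith
  hence "12 * real r \<le> 6^(r-1)" by simp
  also have "(6::real)^(r-1) \<le> u^(r-1)" using u6 by (intro power_mono) auto
  finally have a: "12 * real r \<le> u^(r-1)" .
  have "u^r = u * u^(r-1)" using r3 by (metis Suc_diff_1 not_numeral_le_zero not_gr0 power_Suc)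
  hence nge: "n \<ge> 12 * real r * u" using a upos nu by (simp add: mult.commute mult_left_mono)
  have npos: "n > 0" using nge upos rpos by (smt (verit) mult_pos_pos)
  have "8 * real (r*K) * real D \<le> 8 * real r * (u/2 + 1) * (n / (12 * r * u) + 1)"
  proof -
    have "8 * real (r*K) * real D = (8 * real r) * real K * real D" by simp
    also have "\<dots> \<le> (8 * real r) * (u/2 + 1) * real D"
      using K rpos by (intro mult_right_mono mult_left_mono) auto
    also have "\<dots> \<le> (8 * real r) * (u/2 + 1) * (n / (12 * r * u) + 1)"
      using D rpos upos by (intro mult_left_mono) auto
    finally show ?thesis .
  qed
  also have "\<dots> = (u + 2) * n / (3 * u) + 4 * real r * u + 8 * real r"
  proof -
    have e1: "8 * real r * (u/2 + 1) * (n / (12 * r * u)) = (u + 2) * n / (3 * u)"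
      using upos rpos by (simp add: divide_simps)
    have e2: "8 * real r * (u/2 + 1) = 4 * real r * u + 8 * real r" by (simp add: algebra_simps)
    show ?thesis using e1 e2 by (simp add: distrib_left)
  qed
  also have "(u + 2) * n / (3 * u) \<le> 4 * n / 9"
  proof -
    have "18 * n \<le> 3 * u * n" using u6 npos by (intro mult_right_mono) auto
    moreover have "(u + 2) * n * 9 = 9 * u * n + 18 * n" "4 * n * (3 * u) = 12 * u * n"
      by (simp_all add: algebra_simps)
    ultimately have "(u + 2) * n * 9 \<le> 4 * n * (3 * u)" by simp
    thus ?thesis using upos by (simp add: field_simps)
  qed
  finally have "8 * real (r*K) * real D \<le> 4 * n / 9 + 4 * real r * u + 8 * real r" by simp
  also have "\<dots> < n - 1"
  proof -
    have "6 * real r < u * real r" using u6 rpos by simp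
    moreover have "real r \<ge> 3" using r3 by simp
    ultimately have "4 * (u * real r) + 8 * real r + 1 < 20 * (u * real r) / 3" by linarith
    hence "4 * real r * u + 8 * real r + 1 < 20 * real r * u / 3" by (simp add: algebra_simps)
    also have "\<dots> \<le> 5 * n / 9" using nge by (simp add: algebra_simps)
    finally show ?thesis by simp
  qed
  finally show ?thesis .
qed

lemma edges_in:
  assumes "e \<in> Am r N \<union> Bm r N" "0 < N"
  shows "\<exists>f. e = edg r N f \<and> (\<forall>j\<in>{1..r}. f j < N)"
  using assms bfun_lt[OF assms(2)] unfolding Am_def Bm_def by auto

lemma part_disj:
  assumes "i \<noteq> j"
  shows "part N i \<inter> part N j = {}"
proof (rule ccontr)
  assume "part N i \<inter> part N j \<noteq> {}"
  then obtain v where v: "v \<in> part N i" "v \<in> part N j" by blast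
  have "i*N + (v - i*N) = j*N + (v - j*N)" "v - i*N < N" "v - j*N < N"
    using v unfolding part_def by auto
  hence "i = j" using decode by blast
  thus False using assms by simp
qed

lemma struct_props:
  assumes "r \<ge> 1" "0 < N"
  shows "hypergraph (\<Union>i\<in>{1..r}. part N i) (Am r N \<union> Bm r N)
    \<and> r_uniform r (Am r N \<union> Bm r N)
    \<and> r_partite r (\<Union>i\<in>{1..r}. part N i) (Am r N \<union> Bm r N)"
proof (intro conjI)
  show "hypergraph (\<Union>i\<in>{1..r}. part N i) (Am r N \<union> Bm r N)"
    unfolding hypergraph_def
  proof (intro conjI ballI)
    show "finite (\<Union>i\<in>{1..r}. part N i)" unfolding part_def by auto
    fix e assume "e \<in> Am r N \<union> Bm r N"
    then obtain f where f: "e = edg r N f" "\<forall>j\<in>{1..r}. f j < N" using edges_in assms by blast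
    show "e \<subseteq> (\<Union>i\<in>{1..r}. part N i)"
      using f unfolding edg_def part_def by force
  qed
  show "r_uniform r (Am r N \<union> Bm r N)"
    unfolding r_uniform_def
  proof
    fix e assume "e \<in> Am r N \<union> Bm r N"
    then obtain f where f: "e = edg r N f" "\<forall>j\<in>{1..r}. f j < N" using edges_in assms by blast
    show "finite e \<and> card e = r" using f card_edg[OF f(2)] unfolding edg_def by auto
  qed
  show "r_partite r (\<Union>i\<in>{1..r}. part N i) (Am r N \<union> Bm r N)"
    unfolding r_partite_def
  proof (rule exI[of _ "part N"], intro conjI ballI impI)
    show "(\<Union>i\<in>{1..r}. part N i) = (\<Union>i\<in>{1..r}. part N i)" by simp
    fix i j :: nat assume "i \<noteq> j" thus "part N i \<inter> part N j = {}" by (rule part_disj)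
  next
    fix e i assume e: "e \<in> Am r N \<union> Bm r N" and i: "i \<in> {1..r}"
    then obtain f where f: "e = edg r N f" "\<forall>j\<in>{1..r}. f j < N" using edges_in assms by blast
    show "card (e \<inter> part N i) = 1" using edg_inter_part[OF f(2) i] f by simp
  qed
qed

lemma Am_props:
  assumes "r \<ge> 1" "0 < N"
  shows "matching (Am r N \<union> Bm r N) (Am r N) \<and> card (Am r N) = N"
proof
  have one: "(1::nat) \<in> {1..r}" using assms by simp
  show "matching (Am r N \<union> Bm r N) (Am r N)" unfolding matching_def
  proof (intro conjI ballI impI)
    show "Am r N \<subseteq> Am r N \<union> Bm r N" by simp
    fix e f assume e: "e \<in> Am r N" and f: "f \<in> Am r N" and ne: "e \<noteq> f"
    obtain z where z: "z < N" "e = edg r N (\<lambda>_. z)" using e unfolding Am_def by auto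
    obtain z' where z': "z' < N" "f = edg r N (\<lambda>_. z')" using f unfolding Am_def by auto
    have "z \<noteq> z'" using z z' ne by auto
    thus "e \<inter> f = {}" using edg_disj_iff[of r "\<lambda>_. z" N "\<lambda>_. z'"] z z' by simp
  qed
  have inj: "inj_on (\<lambda>z. edg r N (\<lambda>_. z)) {0..<N}"
  proof (rule inj_onI)
    fix z z' assume zz: "z \<in> {0..<N}" "z' \<in> {0..<N}" "edg r N (\<lambda>_. z) = edg r N (\<lambda>_. z')"
    hence "\<forall>j\<in>{1..r}. (\<lambda>_. z) j = (\<lambda>_. z') j"
      using edg_eq_imp[of r "\<lambda>_. z" N "\<lambda>_. z'"] by auto
    thus "z = z'" using one by auto
  qed
  show "card (Am r N) = N" unfolding Am_def using card_image[OF inj] by simp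
qed

lemma Bm_props:
  assumes "r \<ge> 1" "odd N"
  shows "matching (Am r N \<union> Bm r N) (Bm r N) \<and> card (Bm r N) = N"
proof
  have one: "(1::nat) \<in> {1..r}" using assms by simp
  have Npos: "0 < N" using assms(2) by (cases N) auto
  have blt: "\<forall>j\<in>{1..r}. bfun N x j < N" if "x < N" for x using that bfun_lt[OF Npos] by simp
  show "matching (Am r N \<union> Bm r N) (Bm r N)" unfolding matching_def
  proof (intro conjI ballI impI)
    show "Bm r N \<subseteq> Am r N \<union> Bm r N" by simp
    fix e f assume e: "e \<in> Bm r N" and f: "f \<in> Bm r N" and ne: "e \<noteq> f"
    obtain x where x: "x < N" "e = edg r N (bfun N x)" using e unfolding Bm_def by auto
    obtain x' where x': "x' < N" "f = edg r N (bfun N x')" using f unfolding Bm_def by auto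
    have "x \<noteq> x'" using x x' ne by auto
    hence "\<forall>j\<in>{1..r}. bfun N x j \<noteq> bfun N x' j" using bfun_inj[OF assms(2) x(1) x'(1)] by blast
    thus "e \<inter> f = {}" using edg_disj_iff[OF blt[OF x(1)] blt[OF x'(1)]] x x' by simp
  qed
  have inj: "inj_on (\<lambda>x. edg r N (bfun N x)) {0..<N}"
  proof (rule inj_onI)
    fix x x' assume xx: "x \<in> {0..<N}" "x' \<in> {0..<N}" "edg r N (bfun N x) = edg r N (bfun N x')"
    hence "\<forall>j\<in>{1..r}. bfun N x j = bfun N x' j"
      using edg_eq_imp[OF blt[of x] blt[of x']] by auto
    hence "bfun N x 1 = bfun N x' 1" using one by blast
    thus "x = x'" unfolding bfun_def by simp
  qed
  show "card (Bm r N) = N" unfolding Bm_def using card_image[OF inj] by simp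
qed

theorem theorem2p5:
  fixes r n :: nat
  assumes "r \<ge> 3" and "n > 6 ^ r"
  shows "\<exists>(V :: nat set) (E :: nat set set) (Ms :: nat \<Rightarrow> nat set set).
           hypergraph V E \<and> r_uniform r E \<and> r_partite r V E \<and>
           (\<forall>i\<in>{1..n}. matching E (Ms i) \<and>
              real (card (Ms i)) \<ge> real n + (1 / (12 * real r)) * real n powr ((real r - 1) / real r) - 1) \<and>
           \<not> (\<exists>M. rainbow_matching Ms n M \<and> card M = n)"
proof -
  have r3: "r \<ge> 3" and n6: "n > 6^r" using assms by auto
  have rpos: "real r > 0" using r3 by simp
  have "(1::nat) \<le> 6^r" by simp
  hence n1: "n > 1" using n6 by linarith
  have npos: "real n > 0" using n1 by simp
  define u where "u = real n powr (1 / real r)"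
  have upos: "u > 0" unfolding u_def using npos by simp
  have six: "((6::real)^r) powr (1 / real r) = 6"
  proof -
    have "((6::real)^r) powr (1 / real r) = ((6::real) powr (real r)) powr (1 / real r)"
      by (simp add: powr_realpow)
    also have "\<dots> = 6 powr (real r * (1 / real r))" by (simp add: powr_powr)
    also have "\<dots> = 6" using rpos by simp
    finally show ?thesis .
  qed
  have u6: "u > 6"
  proof -
    have "(6::real)^r < real n" using n6 by (metis of_nat_less_iff of_nat_numeral of_nat_power)
    hence "((6::real)^r) powr (1 / real r) < real n powr (1 / real r)"
      using rpos by (intro powr_less_mono2) auto
    thus ?thesis using six u_def by simp
  qed
  have nu: "real n = u^r"
  proof -
    have "u^r = u powr (real r)" using upos by (simp add: powr_realpow)
    also have "\<dots> = real n powr (1 / real r * real r)" unfolding u_def by (simp add: powr_powr)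
    also have "\<dots> = real n" using rpos npos by simp
    finally show ?thesis by simp
  qed
  have Peq: "real n powr ((real r - 1) / real r) = real n / u"
  proof -
    have "(real r - 1) / real r = 1 - 1 / real r" using rpos by (simp add: field_simps)
    hence "real n powr ((real r - 1) / real r) = real n powr 1 / real n powr (1 / real r)"
      by (simp add: powr_diff)
    thus ?thesis unfolding u_def using npos by simp
  qed
  define s where "s = (1 / (12 * real r)) * real n powr ((real r - 1) / real r) - 1"
  have s_eq: "s = real n / (real (12 * r) * u) - 1" unfolding s_def Peq by simp
  have s_ge: "s \<ge> -1" unfolding s_eq using npos upos rpos by simp
  define t where "t = nat \<lceil>s\<rceil>"
  have t_ge: "real t \<ge> s" unfolding t_def by linarith
  have t_le: "real t \<le> s + 1"
  proof (cases "\<lceil>s\<rceil> \<ge> 0")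
    case True thus ?thesis unfolding t_def by linarith
  next
    case False thus ?thesis unfolding t_def using s_ge by linarith
  qed
  define N0 where "N0 = n + t"
  define N where "N = (if even N0 then N0 + 1 else N0)"
  have oddN: "odd N" unfolding N_def by auto
  have NN0: "N0 \<le> N" "N \<le> N0 + 1" unfolding N_def by auto
  have N_ge: "real N \<ge> real n + s" using NN0 t_ge unfolding N0_def by simp
  have nN: "n \<le> N" using NN0 unfolding N0_def by simp
  have N3: "N \<ge> 3"
  proof -
    have "(6::nat)^3 \<le> 6^r" using r3 by (intro power_increasing) auto
    thus ?thesis using n6 nN by simp
  qed
  define D where "D = N - n"
  have D_le: "real D \<le> real n / (real (12 * r) * u) + 1"
    using NN0 t_le s_eq nN unfolding D_def N0_def by simp
  define k where "k = nat \<lfloor>u/2\<rfloor>"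
  define K where "K = k + 1"
  have k3: "k \<ge> 3" unfolding k_def using u6 by linarith
  have uk: "u < 2 * real k + 2" unfolding k_def using u6 by linarith
  have K_le: "real K \<le> u/2 + 1" unfolding K_def k_def using u6 by linarith
  have twoK: "real ((2::nat)^K) \<ge> 2 * u"
  proof -
    have "4*k + 4 \<le> (2::nat)^(k+1)" by (rule two_pow_ge[OF k3])
    hence "real (4*k+4) \<le> real ((2::nat)^K)" unfolding K_def by linarith
    thus ?thesis using uk by simp
  qed
  define L where "L = r * K"
  have NL: "N \<le> 2^L"
  proof -
    have "real n / (real (12 * r) * u) \<le> real n / 2"
    proof (rule divide_left_mono)
      have "real (12 * r) \<ge> 1" using r3 by simp
      hence "real (12 * r) * u \<ge> 1 * 6" using u6 by (intro mult_mono) auto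
      thus "2 \<le> real (12 * r) * u" by simp
    qed (use npos upos rpos in auto)
    hence "real N \<le> 2 * real n" using D_le nN n1 unfolding D_def by linarith
    also have "2 * real n \<le> 2^r * real n" using r3 npos
      by (intro mult_right_mono) (auto simp: self_le_power)
    also have "\<dots> = (2 * u)^r" using nu by (simp add: power_mult_distrib)
    also have "\<dots> \<le> (real ((2::nat)^K))^r" using twoK upos by (intro power_mono) auto
    also have "\<dots> = real ((2::nat)^L)" unfolding L_def by (simp add: power_mult mult.commute)
    finally show ?thesis by linarith
  qed
  have num: "8 * real (r*K) * real D < real n - 1"
    by (rule numeric_main[OF r3 u6 nu D_le K_le])
  hence num': "8*L*D + 1 < n" unfolding L_def by (metis (mono_tags) of_nat_1 of_nat_add of_nat_less_iff of_nat_mult of_nat_numeral less_diff_eq)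
  define mB where "mB = n div 2"
  define mA where "mA = n - mB"
  have sumAB: "mA + mB = n" unfolding mA_def mB_def by simp
  have key: "2*N*L*(N - n) < mB*(N - mB)"
  proof -
    have "4*L*D < mB" using num' unfolding mB_def by linarith
    hence "4*L*D*N < mB*N" using N3 by simp
    also have "mB*N \<le> mB*(2*(N - mB))" using nN unfolding mB_def by (intro mult_left_mono) auto
    finally have "2*(2*N*L*D) < 2*(mB*(N - mB))" by (simp add: algebra_simps)
    thus ?thesis unfolding D_def by (simp add: algebra_simps)
  qed
  define Ms where "Ms = (\<lambda>i::nat. if i \<le> mA then Am r N else Bm r N)"
  have r1: "r \<ge> 1" using r3 by simp
  have Npos: "0 < N" using N3 by simp
  have nr: "\<not> (\<exists>M. rainbow_matching Ms n M \<and> card M = n)"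
    by (rule no_rainbow[OF r3 oddN N3 nN sumAB NL key]) (simp add: Ms_def)
  have mats: "\<forall>i\<in>{1..n}. matching (Am r N \<union> Bm r N) (Ms i) \<and>
              real (card (Ms i)) \<ge> real n + (1 / (12 * real r)) * real n powr ((real r - 1) / real r) - 1"
  proof
    fix i assume "i \<in> {1..n}"
    have "matching (Am r N \<union> Bm r N) (Ms i) \<and> card (Ms i) = N"
      using Am_props[OF r1 Npos] Bm_props[OF r1 oddN] unfolding Ms_def by auto
    thus "matching (Am r N \<union> Bm r N) (Ms i) \<and>
              real (card (Ms i)) \<ge> real n + (1 / (12 * real r)) * real n powr ((real r - 1) / real r) - 1"
      using N_ge unfolding s_def by simp
  qed
  show ?thesis
    using struct_props[OF r1 Npos] mats nr by blast
qed

end
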